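(* If an $n$-qubit code satisfies the Knill–Laflamme conditions for all spherical Pauli errors $\mathrm{Sph}(E)$ with $\mathrm{wt}(E)<d$, then it also satisfies the Knill–Laflamme conditions for all symmetrized Pauli errors $\mathrm{Sym}(E)$ with $\mathrm{wt}(E)<d$.
   Context: For an $n$-qubit operator $A$, $\mathrm{Sym}(A)=\tfrac{1}{n!}\sum_{\sigma\in S_n}P_\sigma^\dagger AP_\sigma$ where $P_\sigma$ permutes the tensor factors. A Pauli $E$ of weight $w$ (number of non-identity factors) is uniquely $E=E_1\cdots E_w$ with each $E_i$ of weight one, and $\mathrm{Sph}(E)=\mathrm{Sym}(E_1)\cdots\mathrm{Sym}(E_w)$. A code satisfies the Knill–Laflamme conditions for an operator $A$ if $\langle\phi|A|\psi\rangle=c_A\langle\phi|\psi\rangle$ for all codewords, with $c_A$ independent of the codewords. *)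

theory Defs
  imports "HOL-Combinatorics.Permutations" Complex_Main
begin

text \<open>Single-qubit Pauli matrices. Computational basis: False = |0>, True = |1>.\<close>
datatype pauli = PI | PX | PY | PZ

fun pmat :: "pauli \<Rightarrow> bool \<Rightarrow> bool \<Rightarrow> complex" where
  "pmat PI a b = (if a = b then 1 else 0)"
| "pmat PX a b = (if a = b then 0 else 1)"
| "pmat PY a b = (if a = b then 0 else if b then - \<i> else \<i>)"
| "pmat PZ a b = (if a = b then (if a then -1 else 1) else 0)"

text \<open>n-qubit computational basis states: bit strings x with x i = False for i \<ge> n.
  Operators are given by their matrix entries  <x|A|y>, vectors by their coordinates.\<close>
type_synonym qop = "(nat \<Rightarrow> bool) \<Rightarrow> (nat \<Rightarrow> bool) \<Rightarrow> complex"
type_synonym qvec = "(nat \<Rightarrow> bool) \<Rightarrow> complex"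

definition basis :: "nat \<Rightarrow> (nat \<Rightarrow> bool) set" where
  "basis n = {x. \<forall>i\<ge>n. \<not> x i}"

definition op_mult :: "nat \<Rightarrow> qop \<Rightarrow> qop \<Rightarrow> qop" where
  "op_mult n A B = (\<lambda>x y. \<Sum>z\<in>basis n. A x z * B z y)"

definition op_id :: qop where
  "op_id = (\<lambda>x y. if x = y then 1 else 0)"

definition pauli_string :: "nat \<Rightarrow> (nat \<Rightarrow> pauli) \<Rightarrow> bool" where
  "pauli_string n p \<longleftrightarrow> (\<forall>i\<ge>n. p i = PI)"

definition pauli_op :: "nat \<Rightarrow> (nat \<Rightarrow> pauli) \<Rightarrow> qop" where
  "pauli_op n p = (\<lambda>x y. \<Prod>i<n. pmat (p i) (x i) (y i))"

definition supp :: "nat \<Rightarrow> (nat \<Rightarrow> pauli) \<Rightarrow> nat set" where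
  "supp n p = {i. i < n \<and> p i \<noteq> PI}"

definition wt :: "nat \<Rightarrow> (nat \<Rightarrow> pauli) \<Rightarrow> nat" where
  "wt n p = card (supp n p)"

text \<open>Conjugation by the qubit permutation P_sigma:  <x| P_sigma^dagger A P_sigma |y> = <x o sigma|A|y o sigma>.\<close>
definition perm_conj :: "(nat \<Rightarrow> nat) \<Rightarrow> qop \<Rightarrow> qop" where
  "perm_conj \<sigma> A = (\<lambda>x y. A (x \<circ> \<sigma>) (y \<circ> \<sigma>))"

definition Sym :: "nat \<Rightarrow> qop \<Rightarrow> qop" where
  "Sym n A = (\<lambda>x y. (1 / of_nat (fact n)) *
      (\<Sum>\<sigma>\<in>{\<sigma>. \<sigma> permutes {..<n}}. perm_conj \<sigma> A x y))"

definition single :: "(nat \<Rightarrow> pauli) \<Rightarrow> nat \<Rightarrow> (nat \<Rightarrow> pauli)" where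
  "single p i = (\<lambda>j. if j = i then p i else PI)"

text \<open>Sph(E) = Sym(E_1) ... Sym(E_w), the factors E_j ordered by increasing qubit position.\<close>
definition Sph :: "nat \<Rightarrow> (nat \<Rightarrow> pauli) \<Rightarrow> qop" where
  "Sph n p = foldr (\<lambda>i acc. op_mult n (Sym n (pauli_op n (single p i))) acc)
                   (sorted_list_of_set (supp n p)) op_id"

definition inner :: "nat \<Rightarrow> qvec \<Rightarrow> qvec \<Rightarrow> complex" where
  "inner n \<phi> \<psi> = (\<Sum>x\<in>basis n. cnj (\<phi> x) * \<psi> x)"

definition braket :: "nat \<Rightarrow> qvec \<Rightarrow> qop \<Rightarrow> qvec \<Rightarrow> complex" where
  "braket n \<phi> A \<psi> = (\<Sum>x\<in>basis n. \<Sum>y\<in>basis n. cnj (\<phi> x) * A x y * \<psi> y)"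

definition is_code :: "nat \<Rightarrow> qvec set \<Rightarrow> bool" where
  "is_code n C \<longleftrightarrow> (\<lambda>_. 0) \<in> C
     \<and> (\<forall>\<phi>\<in>C. \<forall>\<psi>\<in>C. (\<lambda>x. \<phi> x + \<psi> x) \<in> C)
     \<and> (\<forall>c. \<forall>\<phi>\<in>C. (\<lambda>x. c * \<phi> x) \<in> C)
     \<and> (\<forall>\<phi>\<in>C. \<forall>x. x \<notin> basis n \<longrightarrow> \<phi> x = 0)"

definition KL :: "nat \<Rightarrow> qvec set \<Rightarrow> qop \<Rightarrow> bool" where
  "KL n C A \<longleftrightarrow> (\<exists>c. \<forall>\<phi>\<in>C. \<forall>\<psi>\<in>C. braket n \<phi> A \<psi> = c * inner n \<phi> \<psi>)"

end

theory Submission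
  imports Defs
begin

fun pmul :: "pauli \<Rightarrow> pauli \<Rightarrow> pauli" where
  "pmul PI q = q" | "pmul p PI = p"
| "pmul PX PX = PI" | "pmul PY PY = PI" | "pmul PZ PZ = PI"
| "pmul PX PY = PZ" | "pmul PY PX = PZ"
| "pmul PY PZ = PX" | "pmul PZ PY = PX"
| "pmul PZ PX = PY" | "pmul PX PZ = PY"

fun ph :: "pauli \<Rightarrow> pauli \<Rightarrow> complex" where
  "ph PX PY = \<i>" | "ph PY PX = - \<i>"
| "ph PY PZ = \<i>" | "ph PZ PY = - \<i>"
| "ph PZ PX = \<i>" | "ph PX PZ = - \<i>"
| "ph _ _ = 1"

lemma ph_PI1[simp]: "ph PI q = 1" by (cases q) auto
lemma ph_PI2[simp]: "ph p PI = 1" by (cases p) auto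
lemma pmul_PI2[simp]: "pmul p PI = p" by (cases p) auto

lemma pmat_mult: "pmat p a False * pmat q False c + pmat p a True * pmat q True c
   = ph p q * pmat (pmul p q) a c"
  by (cases p; cases q; cases a; cases c) auto

lemma basis_Suc: "basis (Suc n) = (\<lambda>(z,b). z(n:=b)) ` (basis n \<times> UNIV)"
proof -
  have "z \<in> (\<lambda>(z,b). z(n:=b)) ` (basis n \<times> UNIV)" if "z \<in> basis (Suc n)" for z
  proof -
    have "z = (\<lambda>(z,b). z(n:=b)) (z(n:=False), z n)" by auto
    moreover have "z(n:=False) \<in> basis n" using that by (auto simp: basis_def)
    ultimately show ?thesis by blast
  qed
  moreover have "(\<lambda>(z,b). z(n:=b)) ` (basis n \<times> UNIV) \<subseteq> basis (Suc n)"
    by (auto simp: basis_def)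
  ultimately show ?thesis by blast
qed

lemma finite_basis[simp]: "finite (basis n)"
proof (induction n)
  case 0
  have "basis 0 = {\<lambda>_. False}" by (auto simp: basis_def)
  then show ?case by simp
next
  case (Suc n) then show ?case by (simp add: basis_Suc)
qed

lemma sum_basis_prod:
  fixes f :: "nat \<Rightarrow> bool \<Rightarrow> complex"
  shows   "(\<Sum>z\<in>basis n. \<Prod>j<n. f j (z j)) = (\<Prod>j<n. f j False + f j True)"
proof (induction n)
  case 0
  have "basis 0 = {\<lambda>_. False}" by (auto simp: basis_def)
  then show ?case by simp
next
  case (Suc n)
  have inj: "inj_on (\<lambda>(z,b). z(n:=b)) (basis n \<times> UNIV)"
  proof (rule inj_onI, clarify)
    fix z b z' b' assume zb: "z \<in> basis n" "z' \<in> basis n" and eq: "z(n:=b) = z'(n:=b')"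
    have "b = b'" using fun_cong[OF eq, of n] by simp
    moreover have "z j = z' j" for j
    proof (cases "j = n")
      case True then show ?thesis using zb by (simp add: basis_def)
    next
      case False then show ?thesis using fun_cong[OF eq, of j] by simp
    qed
    ultimately show "z = z' \<and> b = b'" by auto
  qed
  have "(\<Sum>z\<in>basis (Suc n). \<Prod>j<Suc n. f j (z j))
      = (\<Sum>(z,b)\<in>basis n \<times> UNIV. \<Prod>j<Suc n. f j ((z(n:=b)) j))"
    unfolding basis_Suc by (subst sum.reindex[OF inj]) (simp add: case_prod_unfold)
  also have "\<dots> = (\<Sum>z\<in>basis n. \<Sum>b\<in>UNIV. (\<Prod>j<n. f j (z j)) * f n b)"
    by (subst sum.cartesian_product[symmetric]) (simp add: lessThan_Suc mult.commute)
  also have "\<dots> = (\<Sum>z\<in>basis n. (\<Prod>j<n. f j (z j))) * (f n False + f n True)"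
    by (simp add: UNIV_bool sum.distrib) (simp add: distrib_left sum_distrib_right[symmetric])
  finally show ?case using Suc by (simp add: lessThan_Suc)
qed

lemma pauli_mult:
  "op_mult n (pauli_op n p) (pauli_op n q) x y
   = (\<Prod>j<n. ph (p j) (q j)) * pauli_op n (\<lambda>j. pmul (p j) (q j)) x y"
proof -
  have "op_mult n (pauli_op n p) (pauli_op n q) x y
     = (\<Sum>z\<in>basis n. \<Prod>j<n. pmat (p j) (x j) (z j) * pmat (q j) (z j) (y j))"
    unfolding op_mult_def pauli_op_def by (simp only: prod.distrib)
  also have "\<dots> = (\<Prod>j<n. ph (p j) (q j) * pmat (pmul (p j) (q j)) (x j) (y j))"
    by (subst sum_basis_prod) (simp only: pmat_mult)
  finally show ?thesis unfolding pauli_op_def by (simp only: prod.distrib)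
qed

lemma perm_conj_pauli:
  assumes "\<sigma> permutes {..<n}"
  shows "perm_conj \<sigma> (pauli_op n G) = pauli_op n (G \<circ> inv \<sigma>)"
proof (intro ext)
  fix x y
  let ?h = "\<lambda>i. pmat (G (inv \<sigma> i)) (x i) (y i)"
  have "pauli_op n (G \<circ> inv \<sigma>) x y = prod ?h {..<n}" unfolding pauli_op_def by simp
  also have "\<dots> = prod (?h \<circ> \<sigma>) {..<n}" using prod.permute[OF assms] by blast
  also have "\<dots> = perm_conj \<sigma> (pauli_op n G) x y"
    unfolding perm_conj_def pauli_op_def by (simp add: permutes_inverses[OF assms])
  finally show "perm_conj \<sigma> (pauli_op n G) x y = pauli_op n (G \<circ> inv \<sigma>) x y" by simp
qed

lemma basis_comp:
  assumes "\<sigma> permutes {..<n}" "z \<in> basis n"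
  shows "z \<circ> \<sigma> \<in> basis n"
  using assms unfolding basis_def by (auto simp: permutes_not_in)

lemma bij_basis:
  assumes "\<sigma> permutes {..<n}"
  shows "bij_betw (\<lambda>z. z \<circ> \<sigma>) (basis n) (basis n)"
proof (rule bij_betw_byWitness[where f'="\<lambda>z. z \<circ> inv \<sigma>"])
  have inv: "inv \<sigma> permutes {..<n}" using permutes_inv[OF assms] .
  show "\<forall>a\<in>basis n. a \<circ> \<sigma> \<circ> inv \<sigma> = a"
    by (simp add: o_assoc[symmetric] permutes_inv_o[OF assms])
  show "\<forall>a'\<in>basis n. a' \<circ> inv \<sigma> \<circ> \<sigma> = a'"
    by (simp add: o_assoc[symmetric] permutes_inv_o[OF assms])
  show "(\<lambda>z. z \<circ> \<sigma>) ` basis n \<subseteq> basis n" using basis_comp[OF assms] by auto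
  show "(\<lambda>z. z \<circ> inv \<sigma>) ` basis n \<subseteq> basis n" using basis_comp[OF inv] by auto
qed

lemma perm_conj_mult:
  assumes "\<sigma> permutes {..<n}"
  shows "perm_conj \<sigma> (op_mult n A B) = op_mult n (perm_conj \<sigma> A) (perm_conj \<sigma> B)"
proof (intro ext)
  fix x y
  show "perm_conj \<sigma> (op_mult n A B) x y = op_mult n (perm_conj \<sigma> A) (perm_conj \<sigma> B) x y"
    unfolding perm_conj_def op_mult_def
    using sum.reindex_bij_betw[OF bij_basis[OF assms], of "\<lambda>z. A (x \<circ> \<sigma>) z * B z (y \<circ> \<sigma>)"]
    by simp
qed

lemma perm_conj_comp: "perm_conj \<sigma> (perm_conj \<tau> A) = perm_conj (\<sigma> \<circ> \<tau>) A"
  unfolding perm_conj_def by (simp add: o_assoc)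

lemma Sym_invariant:
  assumes "\<tau> permutes {..<n}"
  shows "perm_conj \<tau> (Sym n A) = Sym n A"
proof (intro ext)
  fix x y
  have "perm_conj \<tau> (Sym n A) x y
      = (1 / of_nat (fact n)) * (\<Sum>\<sigma>\<in>{\<sigma>. \<sigma> permutes {..<n}}. perm_conj (\<tau> \<circ> \<sigma>) A x y)"
    unfolding Sym_def by (simp add: perm_conj_comp[symmetric]) (simp add: perm_conj_def)
  also have "\<dots> = Sym n A x y"
    unfolding Sym_def
    using setum_permutations_compose_left[OF assms, of "\<lambda>\<sigma>. perm_conj \<sigma> A x y"] by simp
  finally show "perm_conj \<tau> (Sym n A) x y = Sym n A x y" .
qed

lemma Sym_perm_conj:
  assumes "\<tau> permutes {..<n}"
  shows "Sym n (perm_conj \<tau> A) = Sym n A"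
proof (intro ext)
  fix x y
  show "Sym n (perm_conj \<tau> A) x y = Sym n A x y"
    unfolding Sym_def perm_conj_comp
    using sum_permutations_compose_right[OF assms, of "\<lambda>\<sigma>. perm_conj \<sigma> A x y"] by simp
qed

lemma Sym_mult_sym:
  assumes "\<And>\<sigma>. \<sigma> permutes {..<n} \<Longrightarrow> perm_conj \<sigma> B = B"
  shows "op_mult n (Sym n A) B = Sym n (op_mult n A B)"
proof (intro ext)
  fix x y
  let ?P = "{\<sigma>. \<sigma> permutes {..<n}}"
  let ?c = "1 / (of_nat (fact n) :: complex)"
  have "Sym n (op_mult n A B) x y = ?c * (\<Sum>\<sigma>\<in>?P. op_mult n (perm_conj \<sigma> A) B x y)"
    unfolding Sym_def
    by (intro arg_cong[where f="\<lambda>t. ?c * t"] sum.cong refl)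
       (simp add: perm_conj_mult assms)
  also have "\<dots> = ?c * (\<Sum>\<sigma>\<in>?P. \<Sum>z\<in>basis n. perm_conj \<sigma> A x z * B z y)"
    unfolding op_mult_def by simp
  also have "\<dots> = ?c * (\<Sum>z\<in>basis n. \<Sum>\<sigma>\<in>?P. perm_conj \<sigma> A x z * B z y)"
    by (subst sum.swap) simp
  also have "\<dots> = op_mult n (Sym n A) B x y"
    unfolding op_mult_def Sym_def
    by (simp add: sum_distrib_left sum_distrib_right mult.assoc)
  finally show "op_mult n (Sym n A) B x y = Sym n (op_mult n A B) x y" by simp
qed

lemma Sym_lin:
  "Sym n (\<lambda>x y. c * (\<Sum>\<sigma>\<in>I. d \<sigma> * f \<sigma> x y)) = (\<lambda>x y. c * (\<Sum>\<sigma>\<in>I. d \<sigma> * Sym n (f \<sigma>) x y))"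
proof (intro ext)
  fix x y
  let ?P = "{\<tau>. \<tau> permutes {..<n}}"
  let ?c = "1 / (of_nat (fact n) :: complex)"
  have "Sym n (\<lambda>x y. c * (\<Sum>\<sigma>\<in>I. d \<sigma> * f \<sigma> x y)) x y
     = ?c * (\<Sum>\<tau>\<in>?P. c * (\<Sum>\<sigma>\<in>I. d \<sigma> * f \<sigma> (x \<circ> \<tau>) (y \<circ> \<tau>)))"
    unfolding Sym_def perm_conj_def by simp
  also have "\<dots> = c * (\<Sum>\<tau>\<in>?P. \<Sum>\<sigma>\<in>I. ?c * (d \<sigma> * f \<sigma> (x \<circ> \<tau>) (y \<circ> \<tau>)))"
    by (simp add: sum_distrib_left mult_ac)
  also have "\<dots> = c * (\<Sum>\<sigma>\<in>I. \<Sum>\<tau>\<in>?P. ?c * (d \<sigma> * f \<sigma> (x \<circ> \<tau>) (y \<circ> \<tau>)))"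
    by (subst sum.swap) simp
  also have "\<dots> = c * (\<Sum>\<sigma>\<in>I. d \<sigma> * Sym n (f \<sigma>) x y)"
    unfolding Sym_def perm_conj_def by (simp add: sum_distrib_left mult_ac)
  finally show "Sym n (\<lambda>x y. c * (\<Sum>\<sigma>\<in>I. d \<sigma> * f \<sigma> x y)) x y = c * (\<Sum>\<sigma>\<in>I. d \<sigma> * Sym n (f \<sigma>) x y)" .
qed

definition Fs :: "(nat \<Rightarrow> pauli) \<Rightarrow> (nat \<Rightarrow> pauli) \<Rightarrow> (nat \<Rightarrow> nat) \<Rightarrow> (nat \<Rightarrow> pauli)" where
  "Fs Q G \<sigma> = (\<lambda>j. pmul (Q j) (G (inv \<sigma> j)))"

definition phs :: "nat \<Rightarrow> (nat \<Rightarrow> pauli) \<Rightarrow> (nat \<Rightarrow> pauli) \<Rightarrow> (nat \<Rightarrow> nat) \<Rightarrow> complex" where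
  "phs n Q G \<sigma> = (\<Prod>j<n. ph (Q j) (G (inv \<sigma> j)))"

lemma mult_pauli_Sym:
  "op_mult n (pauli_op n Q) (Sym n (pauli_op n G))
   = (\<lambda>x y. (1 / of_nat (fact n)) * (\<Sum>\<sigma>\<in>{\<sigma>. \<sigma> permutes {..<n}}. phs n Q G \<sigma> * pauli_op n (Fs Q G \<sigma>) x y))"
proof (intro ext)
  fix x y
  let ?P = "{\<tau>. \<tau> permutes {..<n}}"
  let ?c = "1 / (of_nat (fact n) :: complex)"
  have "op_mult n (pauli_op n Q) (Sym n (pauli_op n G)) x y
      = (\<Sum>z\<in>basis n. pauli_op n Q x z * (?c * (\<Sum>\<sigma>\<in>?P. perm_conj \<sigma> (pauli_op n G) z y)))"
    unfolding op_mult_def Sym_def by simp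
  also have "\<dots> = ?c * (\<Sum>\<sigma>\<in>?P. \<Sum>z\<in>basis n. pauli_op n Q x z * perm_conj \<sigma> (pauli_op n G) z y)"
    by (subst sum.swap) (simp add: sum_distrib_left mult_ac)
  also have "\<dots> = ?c * (\<Sum>\<sigma>\<in>?P. op_mult n (pauli_op n Q) (pauli_op n (G \<circ> inv \<sigma>)) x y)"
    unfolding op_mult_def by (intro arg_cong[where f="\<lambda>t. ?c * t"] sum.cong refl) (simp add: perm_conj_pauli)
  also have "\<dots> = ?c * (\<Sum>\<sigma>\<in>?P. phs n Q G \<sigma> * pauli_op n (Fs Q G \<sigma>) x y)"
    unfolding pauli_mult phs_def Fs_def by simp
  finally show "op_mult n (pauli_op n Q) (Sym n (pauli_op n G)) x y
     = ?c * (\<Sum>\<sigma>\<in>?P. phs n Q G \<sigma> * pauli_op n (Fs Q G \<sigma>) x y)" .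
qed

lemma expand:
  "op_mult n (Sym n (pauli_op n Q)) (Sym n (pauli_op n G))
   = (\<lambda>x y. (1 / of_nat (fact n)) * (\<Sum>\<sigma>\<in>{\<sigma>. \<sigma> permutes {..<n}}. phs n Q G \<sigma> * Sym n (pauli_op n (Fs Q G \<sigma>)) x y))"
proof -
  have "op_mult n (Sym n (pauli_op n Q)) (Sym n (pauli_op n G))
      = Sym n (op_mult n (pauli_op n Q) (Sym n (pauli_op n G)))"
    by (rule Sym_mult_sym) (rule Sym_invariant)
  then show ?thesis
    unfolding mult_pauli_Sym by (simp only: Sym_lin)
qed

inductive_set spanS :: "nat \<Rightarrow> nat \<Rightarrow> qop set" for n k where
  gen: "pauli_string n F \<Longrightarrow> wt n F < k \<Longrightarrow> Sym n (pauli_op n F) \<in> spanS n k"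
| null: "(\<forall>x\<in>basis n. \<forall>y\<in>basis n. A x y = 0) \<Longrightarrow> A \<in> spanS n k"
| add: "A \<in> spanS n k \<Longrightarrow> B \<in> spanS n k \<Longrightarrow> (\<lambda>x y. A x y + B x y) \<in> spanS n k"
| smult: "A \<in> spanS n k \<Longrightarrow> (\<lambda>x y. c * A x y) \<in> spanS n k"

lemma spanS_mono: "A \<in> spanS n k \<Longrightarrow> k \<le> k' \<Longrightarrow> A \<in> spanS n k'"
  by (induction rule: spanS.induct) (auto intro: spanS.intros)

lemma spanS_sum:
  assumes "finite I" "\<And>\<sigma>. \<sigma> \<in> I \<Longrightarrow> f \<sigma> \<in> spanS n k"
  shows "(\<lambda>x y. \<Sum>\<sigma>\<in>I. f \<sigma> x y) \<in> spanS n k"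
  using assms
proof (induction I rule: finite_induct)
  case empty
  then show ?case by (auto intro: spanS.null)
next
  case (insert a I)
  have "(\<lambda>x y. f a x y + (\<lambda>x y. \<Sum>\<sigma>\<in>I. f \<sigma> x y) x y) \<in> spanS n k"
    using insert by (intro spanS.add) auto
  then show ?case using insert by simp
qed

lemma spanS_lin_sum:
  assumes "finite I" "\<And>\<sigma>. \<sigma> \<in> I \<Longrightarrow> f \<sigma> \<in> spanS n k"
  shows "(\<lambda>x y. c * (\<Sum>\<sigma>\<in>I. d \<sigma> * f \<sigma> x y)) \<in> spanS n k"
proof -
  have "(\<lambda>x y. \<Sum>\<sigma>\<in>I. (\<lambda>\<sigma> x y. d \<sigma> * f \<sigma> x y) \<sigma> x y) \<in> spanS n k"
    using assms by (intro spanS_sum) (auto intro: spanS.smult)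
  then have "(\<lambda>x y. c * (\<lambda>x y. \<Sum>\<sigma>\<in>I. (\<lambda>\<sigma> x y. d \<sigma> * f \<sigma> x y) \<sigma> x y) x y) \<in> spanS n k"
    by (rule spanS.smult)
  then show ?thesis by simp
qed

lemma braket_add: "braket n \<phi> (\<lambda>x y. A x y + B x y) \<psi> = braket n \<phi> A \<psi> + braket n \<phi> B \<psi>"
  unfolding braket_def by (simp add: distrib_left distrib_right sum.distrib)

lemma braket_smult: "braket n \<phi> (\<lambda>x y. c * A x y) \<psi> = c * braket n \<phi> A \<psi>"
  unfolding braket_def by (simp add: sum_distrib_left mult_ac)

lemma braket_null: "\<forall>x\<in>basis n. \<forall>y\<in>basis n. A x y = 0 \<Longrightarrow> braket n \<phi> A \<psi> = 0"
  unfolding braket_def by simp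

lemma KL_add: "KL n C A \<Longrightarrow> KL n C B \<Longrightarrow> KL n C (\<lambda>x y. A x y + B x y)"
  unfolding KL_def braket_add by (metis distrib_right)

lemma KL_smult: "KL n C A \<Longrightarrow> KL n C (\<lambda>x y. c * A x y)"
  unfolding KL_def braket_smult by (metis mult.assoc)

lemma KL_null: "\<forall>x\<in>basis n. \<forall>y\<in>basis n. A x y = 0 \<Longrightarrow> KL n C A"
  unfolding KL_def by (rule exI[of _ 0]) (simp add: braket_null)

lemma KL_spanS:
  assumes "\<forall>F. pauli_string n F \<and> wt n F < k \<longrightarrow> KL n C (Sym n (pauli_op n F))"
    and "A \<in> spanS n k"
  shows "KL n C A"
  using assms(2)
  by (induction rule: spanS.induct) (auto intro: KL_add KL_smult KL_null simp: assms(1))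

lemma finite_supp[simp]: "finite (supp n p)"
  unfolding supp_def by simp

lemma supp_sub: "supp n p \<subseteq> {..<n}"
  unfolding supp_def by auto

lemma wt_comp:
  assumes "\<tau> permutes {..<n}"
  shows "wt n (G \<circ> \<tau>) = wt n G"
proof -
  have "\<tau> ` supp n (G \<circ> \<tau>) = supp n G"
  proof
    show "\<tau> ` supp n (G \<circ> \<tau>) \<subseteq> supp n G"
      unfolding supp_def using permutes_in_image[OF assms] by auto
    show "supp n G \<subseteq> \<tau> ` supp n (G \<circ> \<tau>)"
    proof
      fix k assume k: "k \<in> supp n G"
      have "inv \<tau> k \<in> supp n (G \<circ> \<tau>)"
        using k permutes_in_image[OF permutes_inv[OF assms]] permutes_inverses[OF assms]
        unfolding supp_def by auto
      then show "k \<in> \<tau> ` supp n (G \<circ> \<tau>)"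
        using permutes_inverses[OF assms] by (metis image_eqI)
    qed
  qed
  moreover have "inj_on \<tau> (supp n (G \<circ> \<tau>))"
    using permutes_inj[OF assms] by (simp add: inj_on_def inj_def)
  ultimately show ?thesis unfolding wt_def by (metis card_image)
qed

lemma pauli_op_cong:
  "(\<And>j. j < n \<Longrightarrow> F j = F' j) \<Longrightarrow> pauli_op n F = pauli_op n F'"
  unfolding pauli_op_def by (intro ext prod.cong) auto

lemma Fs_single_string:
  assumes "i < n" "pauli_string n G" "\<sigma> permutes {..<n}"
  shows "pauli_string n (Fs (single E i) G \<sigma>)"
proof -
  have "inv \<sigma> j = j" if "j \<ge> n" for j
    using permutes_not_in[OF permutes_inv[OF assms(3)]] that by auto
  then show ?thesis using assms unfolding pauli_string_def Fs_def single_def by auto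
qed

lemma Fs_single_supp:
  assumes "i < n"
  shows "supp n (Fs (single E i) G \<sigma>) \<subseteq> insert i (supp n (G \<circ> inv \<sigma>))"
  unfolding supp_def Fs_def single_def by auto

lemma Fs_single_supp2:
  assumes "i < n" "G (inv \<sigma> i) \<noteq> PI"
  shows "supp n (Fs (single E i) G \<sigma>) \<subseteq> supp n (G \<circ> inv \<sigma>)"
  using assms unfolding supp_def Fs_def single_def by auto

lemma wt_Fs:
  assumes "i < n" "\<sigma> permutes {..<n}"
  shows "wt n (Fs (single E i) G \<sigma>) \<le> Suc (wt n G)"
proof -
  have "wt n (Fs (single E i) G \<sigma>) \<le> card (insert i (supp n (G \<circ> inv \<sigma>)))"
    unfolding wt_def by (rule card_mono) (use Fs_single_supp[OF assms(1)] in auto)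
  also have "\<dots> \<le> Suc (wt n (G \<circ> inv \<sigma>))"
    unfolding wt_def by (simp add: card_insert_if)
  finally show ?thesis using wt_comp[OF permutes_inv[OF assms(2)]] by simp
qed

lemma wt_Fs2:
  assumes "i < n" "\<sigma> permutes {..<n}" "G (inv \<sigma> i) \<noteq> PI"
  shows "wt n (Fs (single E i) G \<sigma>) \<le> wt n G"
proof -
  have "wt n (Fs (single E i) G \<sigma>) \<le> wt n (G \<circ> inv \<sigma>)"
    unfolding wt_def by (rule card_mono) (use Fs_single_supp2[of i n G \<sigma> E] assms in auto)
  then show ?thesis using wt_comp[OF permutes_inv[OF assms(2)]] by simp
qed

lemma op_mult_add: "op_mult n A (\<lambda>x y. B x y + c * D x y) = (\<lambda>x y. op_mult n A B x y + c * op_mult n A D x y)"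
  unfolding op_mult_def by (simp add: distrib_left sum.distrib sum_distrib_left mult_ac)

lemma op_mult_add2: "op_mult n A (\<lambda>x y. B x y + D x y) = (\<lambda>x y. op_mult n A B x y + op_mult n A D x y)"
  unfolding op_mult_def by (simp add: distrib_left sum.distrib)

lemma op_mult_smult: "op_mult n A (\<lambda>x y. c * D x y) = (\<lambda>x y. c * op_mult n A D x y)"
  unfolding op_mult_def by (simp add: sum_distrib_left mult_ac)

lemma mult_gen:
  assumes "i < n" "pauli_string n G" "wt n G < k"
  shows "op_mult n (Sym n (pauli_op n (single E i))) (Sym n (pauli_op n G)) \<in> spanS n (Suc k)"
  unfolding expand
proof (rule spanS_lin_sum)
  show "finite {\<sigma>. \<sigma> permutes {..<n}}" by (simp add: finite_permutations)
  fix \<sigma> assume "\<sigma> \<in> {\<sigma>. \<sigma> permutes {..<n}}"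
  then have s: "\<sigma> permutes {..<n}" by simp
  show "Sym n (pauli_op n (Fs (single E i) G \<sigma>)) \<in> spanS n (Suc k)"
    using wt_Fs[OF assms(1) s, of E G] assms Fs_single_string[OF assms(1,2) s]
    by (intro spanS.gen) auto
qed

lemma mult_span:
  assumes "i < n" "R \<in> spanS n k"
  shows "op_mult n (Sym n (pauli_op n (single E i))) R \<in> spanS n (Suc k)"
  using assms(2)
proof (induction rule: spanS.induct)
  case (gen F)
  then show ?case using mult_gen[OF assms(1)] by blast
next
  case (null A)
  then show ?case unfolding op_mult_def by (intro spanS.null) auto
next
  case (add A B)
  then show ?case unfolding op_mult_add2 by (intro spanS.add)
next
  case (smult A c)
  then show ?case unfolding op_mult_smult by (intro spanS.smult)
qed

lemma Sym_Fs_eq: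
  assumes i: "i < n" and s: "\<sigma> permutes {..<n}" and h: "(E(i:=PI)) (inv \<sigma> i) = PI"
  shows "Sym n (pauli_op n (Fs (single E i) (E(i:=PI)) \<sigma>)) = Sym n (pauli_op n E)"
proof -
  define j0 where "j0 = inv \<sigma> i"
  define \<pi> where "\<pi> = transpose i j0 \<circ> inv \<sigma>"
  have si: "inv \<sigma> permutes {..<n}" using permutes_inv[OF s] .
  have j0n: "j0 < n" unfolding j0_def using permutes_in_image[OF si, of i] i by simp
  have pp: "\<pi> permutes {..<n}" unfolding \<pi>_def
    by (rule permutes_compose[OF si]) (rule permutes_swap_id, use i j0n in auto)
  have injs: "inv \<sigma> j = inv \<sigma> i \<longleftrightarrow> j = i" for j
    using permutes_inj[OF si] by (auto simp: inj_def)
  have "pauli_op n (Fs (single E i) (E(i:=PI)) \<sigma>) = pauli_op n (E \<circ> \<pi>)"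
  proof (rule pauli_op_cong)
    fix j assume "j < n"
    show "Fs (single E i) (E(i:=PI)) \<sigma> j = (E \<circ> \<pi>) j"
    proof (cases "j = i")
      case True
      then show ?thesis using h unfolding Fs_def single_def \<pi>_def j0_def by simp
    next
      case False
      then have ne: "inv \<sigma> j \<noteq> j0" using injs unfolding j0_def by auto
      show ?thesis
      proof (cases "inv \<sigma> j = i")
        case True
        have "j0 \<noteq> i"
        proof
          assume "j0 = i"
          then have "inv \<sigma> j = inv \<sigma> i" using True unfolding j0_def by simp
          then show False using injs False by simp
        qed
        then have "E j0 = PI" using h unfolding j0_def by simp
        then show ?thesis using True False unfolding Fs_def single_def \<pi>_def by simp
      next
        case False2: False
        then show ?thesis using False ne unfolding Fs_def single_def \<pi>_def by simp
      qed
    qed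
  qed
  also have "\<dots> = perm_conj (inv \<pi>) (pauli_op n E)"
    using perm_conj_pauli[OF permutes_inv[OF pp], of E] permutes_inv_inv[OF pp] by simp
  finally show ?thesis using Sym_perm_conj[OF permutes_inv[OF pp]] by simp
qed

lemma phs_one:
  assumes "G (inv \<sigma> i) = PI"
  shows "phs n (single E i) G \<sigma> = 1"
  unfolding phs_def single_def using assms by (intro prod.neutral) auto

lemma main_step:
  assumes i: "i < n" and ps: "pauli_string n E"
  shows "\<exists>\<alpha>. \<alpha> \<noteq> 0 \<and> (\<lambda>x y. op_mult n (Sym n (pauli_op n (single E i))) (Sym n (pauli_op n (E(i:=PI)))) x y
             - \<alpha> * Sym n (pauli_op n E) x y) \<in> spanS n (Suc (wt n (E(i:=PI))))"
proof -
  define G where "G = E(i:=PI)"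
  define Q where "Q = single E i"
  define P where "P = {\<sigma>. \<sigma> permutes {..<n}}"
  define S where "S = {\<sigma>. G (inv \<sigma> i) = PI}"
  define c where "c = 1 / (of_nat (fact n) :: complex)"
  define T where "T = (\<lambda>\<sigma> x y. phs n Q G \<sigma> * Sym n (pauli_op n (Fs Q G \<sigma>)) x y)"
  have fin: "finite P" unfolding P_def by (simp add: finite_permutations)
  have TS: "T \<sigma> x y = Sym n (pauli_op n E) x y" if "\<sigma> \<in> P \<inter> S" for \<sigma> x y
    using that Sym_Fs_eq[OF i, of \<sigma> E] phs_one[of G \<sigma> i n E]
    unfolding T_def P_def S_def G_def Q_def by simp
  define \<alpha> where "\<alpha> = c * of_nat (card (P \<inter> S))"
  have "id \<in> P \<inter> S" unfolding P_def S_def G_def by simp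
  then have "card (P \<inter> S) > 0" using fin by (auto simp: card_gt_0_iff)
  then have a0: "\<alpha> \<noteq> 0" unfolding \<alpha>_def c_def by simp
  have eq: "(\<lambda>x y. op_mult n (Sym n (pauli_op n Q)) (Sym n (pauli_op n G)) x y - \<alpha> * Sym n (pauli_op n E) x y)
      = (\<lambda>x y. c * (\<Sum>\<sigma>\<in>P - S. phs n Q G \<sigma> * Sym n (pauli_op n (Fs Q G \<sigma>)) x y))"
  proof (intro ext)
    fix x y
    have "op_mult n (Sym n (pauli_op n Q)) (Sym n (pauli_op n G)) x y = c * (\<Sum>\<sigma>\<in>P. T \<sigma> x y)"
      unfolding expand T_def c_def P_def by simp
    also have "\<dots> = c * ((\<Sum>\<sigma>\<in>P \<inter> S. T \<sigma> x y) + (\<Sum>\<sigma>\<in>P - S. T \<sigma> x y))"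
      using sum.Int_Diff[OF fin, of "\<lambda>\<sigma>. T \<sigma> x y" S] by simp
    also have "(\<Sum>\<sigma>\<in>P \<inter> S. T \<sigma> x y) = of_nat (card (P \<inter> S)) * Sym n (pauli_op n E) x y"
      using TS by simp
    finally show "op_mult n (Sym n (pauli_op n Q)) (Sym n (pauli_op n G)) x y - \<alpha> * Sym n (pauli_op n E) x y
        = c * (\<Sum>\<sigma>\<in>P - S. phs n Q G \<sigma> * Sym n (pauli_op n (Fs Q G \<sigma>)) x y)"
      unfolding \<alpha>_def T_def by (simp add: algebra_simps)
  qed
  have memb: "(\<lambda>x y. c * (\<Sum>\<sigma>\<in>P - S. phs n Q G \<sigma> * Sym n (pauli_op n (Fs Q G \<sigma>)) x y)) \<in> spanS n (Suc (wt n G))"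
  proof (rule spanS_lin_sum)
    show "finite (P - S)" using fin by simp
    fix \<sigma> assume "\<sigma> \<in> P - S"
    then have s: "\<sigma> permutes {..<n}" and g: "G (inv \<sigma> i) \<noteq> PI" unfolding P_def S_def by auto
    have pG: "pauli_string n G" using ps i unfolding G_def pauli_string_def by auto
    show "Sym n (pauli_op n (Fs Q G \<sigma>)) \<in> spanS n (Suc (wt n G))"
      unfolding Q_def using wt_Fs2[of i n \<sigma> G E] Fs_single_string[of i n G \<sigma> E] i s g pG
      by (intro spanS.gen) auto
  qed
  show ?thesis unfolding G_def[symmetric] Q_def[symmetric]
    by (rule exI[of _ \<alpha>]) (simp only: a0 eq memb simp_thms)
qed

lemma supp_upd: "supp n (E(i:=PI)) = supp n E - {i}"
  unfolding supp_def by auto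

lemma Sph_step:
  assumes "supp n E \<noteq> {}"
  shows "Sph n E = op_mult n (Sym n (pauli_op n (single E (Min (supp n E)))))
                      (Sph n (E(Min (supp n E) := PI)))"
proof -
  define i where "i = Min (supp n E)"
  have sl: "sorted_list_of_set (supp n E) = i # sorted_list_of_set (supp n E - {i})"
    unfolding i_def using assms by (simp add: sorted_list_of_set_nonempty)
  have "Sph n E = op_mult n (Sym n (pauli_op n (single E i)))
     (foldr (\<lambda>j acc. op_mult n (Sym n (pauli_op n (single E j))) acc) (sorted_list_of_set (supp n E - {i})) op_id)"
    unfolding Sph_def sl by simp
  moreover have "foldr (\<lambda>j acc. op_mult n (Sym n (pauli_op n (single E j))) acc) (sorted_list_of_set (supp n E - {i})) op_id
      = Sph n (E(i:=PI))"
    unfolding Sph_def supp_upd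
  proof (rule foldr_cong)
    fix a j assume "j \<in> set (sorted_list_of_set (supp n E - {i}))"
    then have "j \<noteq> i" by simp
    then have "single (E(i:=PI)) j = single E j" unfolding single_def by auto
    then show "op_mult n (Sym n (pauli_op n (single E j))) a = op_mult n (Sym n (pauli_op n (single (E(i:=PI)) j))) a"
      by simp
  qed auto
  ultimately show ?thesis unfolding i_def by simp
qed

lemma pauli_op_id:
  assumes "\<forall>j<n. E j = PI"
  shows "pauli_op n E x y = (if \<forall>j<n. x j = y j then 1 else 0)"
proof (cases "\<forall>j<n. x j = y j")
  case True
  then show ?thesis using assms unfolding pauli_op_def by simp
next
  case False
  then obtain j where "j < n" "x j \<noteq> y j" by auto
  then show ?thesis using assms False unfolding pauli_op_def
    by (simp add: prod_zero_iff) (metis lessThan_iff)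
qed

lemma base_case:
  assumes ps: "pauli_string n E" and w: "wt n E = 0"
  shows "(\<lambda>x y. Sph n E x y - 1 * Sym n (pauli_op n E) x y) \<in> spanS n 0"
proof (rule spanS.null, intro ballI)
  fix x y assume x: "x \<in> basis n" and y: "y \<in> basis n"
  have s0: "supp n E = {}" using w unfolding wt_def by simp
  then have Eid: "\<forall>j<n. E j = PI" unfolding supp_def by auto
  have "Sph n E = op_id" unfolding Sph_def s0 by simp
  have tm: "perm_conj \<sigma> (pauli_op n E) x y = op_id x y" if s: "\<sigma> permutes {..<n}" for \<sigma>
  proof -
    have "(\<forall>j<n. x (\<sigma> j) = y (\<sigma> j)) \<longleftrightarrow> x = y"
    proof
      assume h: "\<forall>j<n. x (\<sigma> j) = y (\<sigma> j)"
      show "x = y"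
      proof
        fix k
        show "x k = y k"
        proof (cases "k < n")
          case True
          then have "inv \<sigma> k < n" using permutes_in_image[OF permutes_inv[OF s], of k] by simp
          then show ?thesis using h permutes_inverses[OF s] by metis
        next
          case False
          then show ?thesis using x y unfolding basis_def by auto
        qed
      qed
    qed auto
    then show ?thesis unfolding perm_conj_def op_id_def pauli_op_id[OF Eid] by simp
  qed
  have "Sym n (pauli_op n E) x y = (1 / of_nat (fact n)) * (of_nat (card {\<sigma>. \<sigma> permutes {..<n}}) * op_id x y)"
    unfolding Sym_def using tm by simp
  also have "\<dots> = op_id x y"
    using card_permutations[of "{..<n}" n] by simp
  finally show "Sph n E x y - 1 * Sym n (pauli_op n E) x y = 0"
    using \<open>Sph n E = op_id\<close> by simp
qed

lemma IC:
  "pauli_string n E \<Longrightarrow> \<exists>c. c \<noteq> 0 \<and> (\<lambda>x y. Sph n E x y - c * Sym n (pauli_op n E) x y) \<in> spanS n (wt n E)"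
proof (induction "wt n E" arbitrary: E)
  case 0
  then show ?case using base_case[OF 0(2)] by (intro exI[of _ 1]) simp
next
  case (Suc w)
  have ne: "supp n E \<noteq> {}" using Suc(2) unfolding wt_def by auto
  define i where "i = Min (supp n E)"
  have iS: "i \<in> supp n E" unfolding i_def using ne by simp
  then have i: "i < n" unfolding supp_def by simp
  define E' where "E' = E(i:=PI)"
  have psE': "pauli_string n E'" using Suc(3) i unfolding E'_def pauli_string_def by auto
  have wE': "wt n E' = w"
    using Suc(2) iS unfolding wt_def E'_def supp_upd by simp
  obtain c' where c': "c' \<noteq> 0" and R: "(\<lambda>x y. Sph n E' x y - c' * Sym n (pauli_op n E') x y) \<in> spanS n w"
    using Suc(1)[OF wE'[symmetric] psE'] wE' by auto
  define A where "A = Sym n (pauli_op n (single E i))"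
  define R where "R = (\<lambda>x y. Sph n E' x y - c' * Sym n (pauli_op n E') x y)"
  obtain \<alpha> where a: "\<alpha> \<noteq> 0"
    and D: "(\<lambda>x y. op_mult n A (Sym n (pauli_op n E')) x y - \<alpha> * Sym n (pauli_op n E) x y) \<in> spanS n (Suc w)"
    using main_step[OF i Suc(3)] wE' unfolding A_def E'_def by auto
  have M: "op_mult n A R \<in> spanS n (Suc w)"
    unfolding A_def R_def using mult_span[OF i R] .
  have SphE: "Sph n E = op_mult n A (Sph n E')"
    using Sph_step[OF ne] unfolding A_def E'_def i_def by simp
  have SphE': "Sph n E' = (\<lambda>x y. R x y + c' * Sym n (pauli_op n E') x y)"
    unfolding R_def by simp
  have eq: "(\<lambda>x y. Sph n E x y - (c' * \<alpha>) * Sym n (pauli_op n E) x y)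
      = (\<lambda>x y. op_mult n A R x y + c' * (op_mult n A (Sym n (pauli_op n E')) x y - \<alpha> * Sym n (pauli_op n E) x y))"
    unfolding SphE SphE' op_mult_add by (simp add: algebra_simps)
  have "(\<lambda>x y. op_mult n A R x y + (\<lambda>x y. c' * (\<lambda>x y. op_mult n A (Sym n (pauli_op n E')) x y - \<alpha> * Sym n (pauli_op n E) x y) x y) x y) \<in> spanS n (Suc w)"
    by (intro spanS.add spanS.smult M D)
  then have "(\<lambda>x y. Sph n E x y - (c' * \<alpha>) * Sym n (pauli_op n E) x y) \<in> spanS n (Suc w)"
    unfolding eq by simp
  then show ?case using c' a Suc(2)[symmetric] by (intro exI[of _ "c' * \<alpha>"]) simp
qed

theorem lemmaS8:
  fixes n d :: nat and C :: "qvec set"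
  assumes "is_code n C"
    and "\<forall>p. pauli_string n p \<and> wt n p < d \<longrightarrow> KL n C (Sph n p)"
  shows "\<forall>p. pauli_string n p \<and> wt n p < d \<longrightarrow> KL n C (Sym n (pauli_op n p))"
proof -
  have "\<forall>p. pauli_string n p \<and> wt n p = m \<and> m < d \<longrightarrow> KL n C (Sym n (pauli_op n p))" for m
  proof (induction m rule: less_induct)
    case (less m)
    show ?case
    proof (intro allI impI)
      fix p assume h: "pauli_string n p \<and> wt n p = m \<and> m < d"
      have IH: "\<forall>F. pauli_string n F \<and> wt n F < m \<longrightarrow> KL n C (Sym n (pauli_op n F))"
        using less h by auto
      obtain c where c: "c \<noteq> 0"
        and D: "(\<lambda>x y. Sph n p x y - c * Sym n (pauli_op n p) x y) \<in> spanS n (wt n p)"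
        using IC h by blast
      have KD: "KL n C (\<lambda>x y. Sph n p x y - c * Sym n (pauli_op n p) x y)"
        using KL_spanS[OF _ D] IH h by auto
      have KS: "KL n C (Sph n p)" using assms(2) h by auto
      have "KL n C (\<lambda>x y. (1/c) * (\<lambda>x y. Sph n p x y + (-1) * (\<lambda>x y. Sph n p x y - c * Sym n (pauli_op n p) x y) x y) x y)"
        by (intro KL_smult KL_add KS KD)
      moreover have "(\<lambda>x y. (1/c) * (\<lambda>x y. Sph n p x y + (-1) * (\<lambda>x y. Sph n p x y - c * Sym n (pauli_op n p) x y) x y) x y)
          = Sym n (pauli_op n p)"
        using c by (intro ext) (simp add: field_simps)
      ultimately show "KL n C (Sym n (pauli_op n p))" by simp
    qed
  qed
  then show ?thesis by blast
qed

end
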